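(* Let $S$ be a finite set, $f:S\to\mathbb{R}$ a fitness function to be maximized, $S_{\mathrm{opt}}$ the set of maximizers of $f$ and $S_{\mathrm{non}}=S\setminus S_{\mathrm{opt}}$ (assumed nonempty). Let $s1,\dots,s\kappa$ be mutation operators on $S$ that are mutually complementary on $f$, i.e., writing $\rho_{\min}=\min\{\rho(\mathbf{T}_{s1}),\dots,\rho(\mathbf{T}_{s\kappa})\}$: for every $x\in S_{\mathrm{non}}$ and every $sl\in\{s1,\dots,s\kappa\}$ with $P_{sl}(x,x)\ge\rho_{\min}$, there exists $sk\neq sl$ with $P_{sk}(x,x)<\rho_{\min}$. Then there exists a strategy probability distribution $\mathbf{q}$ over $\{s1,\dots,s\kappa\}$ such that the homogeneous mixed strategy (1+1) EA with distribution $\mathbf{q}$ satisfies, for every $k=1,\dots,\kappa$, $R(\mathbf{T}_{\mathbf{q}})>R(\mathbf{T}_{sk})$ and $T(\mathbf{T}_{\mathbf{q}})<T(\mathbf{T}_{sk})$; i.e. its asymptotic convergence rate is larger and its asymptotic hitting time is shorter than those of any pure strategy EA using one of these mutation operators.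
   Context: A mutation operator $s$ on the finite set $S$ is a stochastic matrix $\mathbf{P}_{m,s}=[P_{m,s}(x,y)]_{x,y\in S}$ (probability that mutating $x$ yields $y$). Strict elitist selection between parent $x$ and offspring $y$ keeps $y$ if $f(y)>f(x)$ and keeps $x$ otherwise. The pure strategy (1+1) EA EA($s$) repeatedly mutates the current individual by $s$ and applies strict elitist selection; it is a homogeneous Markov chain on $S$ with transition probabilities $P_s(x,y)=P_{m,s}(x,y)$ if $f(y)>f(x)$, $P_s(x,y)=0$ if $y\neq x$ and $f(y)\le f(x)$, and $P_s(x,x)=1-\sum_{y:\,f(y)>f(x)}P_{m,s}(x,y)$. A (state-dependent) strategy probability distribution over operators $s1,\dots,s\kappa$ is a map $x\mapsto \mathbf{q}(x)=(q_{s1}(x),\dots,q_{s\kappa}(x))$ with $q_{sk}(x)\in[0,1]$ and $\sum_k q_{sk}(x)=1$. The homogeneous mixed strategy (1+1) EA with distribution $\mathbf{q}$ at each generation, with current individual $x$, chooses operator $sk$ with probability $q_{sk}(x)$, mutates $x$ by it, and applies strict elitist selection; its transition matrix is $P_{\mathbf{q}}(x,y)=\sum_{k}q_{sk}(x)P_{sk}(x,y)$. For such an EA with transition matrix $\mathbf{P}$, let $\mathbf{T}$ denote the submatrix $[P(x,y)]_{x,y\in S_{\mathrm{non}}}$ and $\rho(\mathbf{T})$ its spectral radius. The asymptotic convergence rate is $R(\mathbf{T})=-\ln\rho(\mathbf{T})$ (with $-\ln 0=+\infty$). The asymptotic hitting time is $T(\mathbf{T})=\rho((\mathbf{I}-\mathbf{T})^{-1})$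 if $\rho(\mathbf{T})<1$ and $T(\mathbf{T})=+\infty$ if $\rho(\mathbf{T})=1$. Subscripts $\mathbf{q}$ and $sk$ indicate the matrices of the mixed strategy EA and of the pure strategy EA($sk$), respectively. *)

theory Defs
  imports Complex_Main "HOL-Library.Extended_Real"
begin

text \<open>The search space S is the finite type 'a (S = UNIV). Matrices over S are
functions 'a \<Rightarrow> 'a \<Rightarrow> real. Mutation operators are indexed by k < \<kappa>.\<close>

definition S_opt :: "('a \<Rightarrow> real) \<Rightarrow> 'a set" where
  "S_opt f = {x. \<forall>y. f y \<le> f x}"

definition S_non :: "('a \<Rightarrow> real) \<Rightarrow> 'a set" where
  "S_non f = UNIV - S_opt f"

definition stochastic :: "('a::finite \<Rightarrow> 'a \<Rightarrow> real) \<Rightarrow> bool" where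
  "stochastic P \<longleftrightarrow> (\<forall>x y. 0 \<le> P x y) \<and> (\<forall>x. (\<Sum>y\<in>UNIV. P x y) = 1)"

definition ea_trans :: "('a::finite \<Rightarrow> real) \<Rightarrow> ('a \<Rightarrow> 'a \<Rightarrow> real) \<Rightarrow> 'a \<Rightarrow> 'a \<Rightarrow> real" where
  "ea_trans f Pm x y =
     (if f y > f x then Pm x y
      else if y = x then 1 - (\<Sum>z\<in>{z. f z > f x}. Pm x z)
      else 0)"

definition strategy_distribution :: "nat \<Rightarrow> ('a \<Rightarrow> nat \<Rightarrow> real) \<Rightarrow> bool" where
  "strategy_distribution \<kappa> q \<longleftrightarrow>
     (\<forall>x k. k < \<kappa> \<longrightarrow> 0 \<le> q x k \<and> q x k \<le> 1) \<and> (\<forall>x. (\<Sum>k<\<kappa>. q x k) = 1)"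

definition mixed_trans :: "('a::finite \<Rightarrow> real) \<Rightarrow> nat \<Rightarrow> (nat \<Rightarrow> 'a \<Rightarrow> 'a \<Rightarrow> real)
    \<Rightarrow> ('a \<Rightarrow> nat \<Rightarrow> real) \<Rightarrow> 'a \<Rightarrow> 'a \<Rightarrow> real" where
  "mixed_trans f \<kappa> Pm q x y = (\<Sum>k<\<kappa>. q x k * ea_trans f (Pm k) x y)"

definition eigenvalues_on :: "'a set \<Rightarrow> ('a \<Rightarrow> 'a \<Rightarrow> real) \<Rightarrow> complex set" where
  "eigenvalues_on A M = {c. \<exists>v :: 'a \<Rightarrow> complex. (\<exists>i\<in>A. v i \<noteq> 0) \<and>
      (\<forall>i\<in>A. (\<Sum>j\<in>A. complex_of_real (M i j) * v j) = c * v i)}"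

definition spectral_radius_on :: "'a set \<Rightarrow> ('a \<Rightarrow> 'a \<Rightarrow> real) \<Rightarrow> real" where
  "spectral_radius_on A M = Max (cmod ` eigenvalues_on A M)"

definition inv_I_minus_on :: "'a set \<Rightarrow> ('a \<Rightarrow> 'a \<Rightarrow> real) \<Rightarrow> 'a \<Rightarrow> 'a \<Rightarrow> real" where
  "inv_I_minus_on A M = (SOME N. \<forall>i\<in>A. \<forall>j\<in>A.
      (\<Sum>l\<in>A. ((if i = l then 1 else 0) - M i l) * N l j) = (if i = j then 1 else 0))"

definition asym_rate :: "('a \<Rightarrow> real) \<Rightarrow> ('a \<Rightarrow> 'a \<Rightarrow> real) \<Rightarrow> ereal" where
  "asym_rate f P =
     (let r = spectral_radius_on (S_non f) P in if r = 0 then \<infinity> else ereal (- ln r))"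

definition asym_hitting_time :: "('a \<Rightarrow> real) \<Rightarrow> ('a \<Rightarrow> 'a \<Rightarrow> real) \<Rightarrow> ereal" where
  "asym_hitting_time f P =
     (if spectral_radius_on (S_non f) P < 1
      then ereal (spectral_radius_on (S_non f) (inv_I_minus_on (S_non f) P))
      else \<infinity>)"

end

theory Submission
  imports Defs
begin

definition tri :: "'a set \<Rightarrow> ('a \<Rightarrow> real) \<Rightarrow> ('a \<Rightarrow> 'a \<Rightarrow> real) \<Rightarrow> bool" where
  "tri A g M \<longleftrightarrow> (\<forall>i\<in>A. \<forall>j\<in>A. i \<noteq> j \<longrightarrow> M i j \<noteq> 0 \<longrightarrow> g i < g j)"

lemma tri_subset: "tri A g M \<Longrightarrow> B \<subseteq> A \<Longrightarrow> tri B g M"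
  unfolding tri_def by blast

lemma obtain_min:
  fixes g :: "'a \<Rightarrow> real"
  assumes "finite A" "A \<noteq> {}"
  obtains m where "m \<in> A" "\<And>j. j \<in> A \<Longrightarrow> g m \<le> g j"
proof -
  have "Min (g ` A) \<in> g ` A" using assms by simp
  then obtain m where "m \<in> A" "g m = Min (g ` A)" by auto
  then show ?thesis using that assms by auto
qed

lemma obtain_max:
  fixes g :: "'a \<Rightarrow> real"
  assumes "finite A" "A \<noteq> {}"
  obtains m where "m \<in> A" "\<And>j. j \<in> A \<Longrightarrow> g j \<le> g m"
proof -
  have "Max (g ` A) \<in> g ` A" using assms by simp
  then obtain m where "m \<in> A" "g m = Max (g ` A)" by auto
  then show ?thesis using that assms by auto
qed

lemma solve:
  fixes M :: "'a \<Rightarrow> 'a \<Rightarrow> real"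
  assumes "finite A" "tri A g M" "\<forall>i\<in>A. d i \<noteq> 0"
  shows "\<exists>x. \<forall>i\<in>A. d i * x i - (\<Sum>l\<in>A-{i}. M i l * x l) = b i"
  using assms
proof (induction "card A" arbitrary: A rule: less_induct)
  case less
  show ?case
  proof (cases "A = {}")
    case True then show ?thesis by simp
  next
    case False
    obtain m where m: "m \<in> A" "\<And>j. j \<in> A \<Longrightarrow> g m \<le> g j"
      using obtain_min[OF less.prems(1) False] by metis
    define A' where "A' = A - {m}"
    have cA: "card A' < card A" unfolding A'_def using m(1) less.prems(1)
      by (meson card_Diff1_less)
    have "finite A'" "tri A' g M" "\<forall>i\<in>A'. d i \<noteq> 0"
      using less.prems tri_subset[of A g M A'] unfolding A'_def by auto
    then obtain x' where x': "\<forall>i\<in>A'. d i * x' i - (\<Sum>l\<in>A'-{i}. M i l * x' l) = b i"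
      using less.hyps[OF cA] by blast
    define x where "x = x'(m := (b m + (\<Sum>l\<in>A'. M m l * x' l)) / d m)"
    have "\<forall>i\<in>A. d i * x i - (\<Sum>l\<in>A-{i}. M i l * x l) = b i"
    proof
      fix i assume i: "i \<in> A"
      show "d i * x i - (\<Sum>l\<in>A-{i}. M i l * x l) = b i"
      proof (cases "i = m")
        case True
        have "(\<Sum>l\<in>A-{i}. M i l * x l) = (\<Sum>l\<in>A'. M m l * x' l)"
          unfolding A'_def True x_def by (rule sum.cong) auto
        moreover have "d m \<noteq> 0" using less.prems(3) m(1) by auto
        ultimately show ?thesis using True unfolding x_def by (simp add: field_simps)
      next
        case False
        have iA': "i \<in> A'" using i False unfolding A'_def by auto
        have Mim: "M i m = 0" using less.prems(2) i m False unfolding tri_def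
          by (meson not_less)
        have "A - {i} = insert m (A' - {i})" using i m(1) False unfolding A'_def by auto
        then have "(\<Sum>l\<in>A-{i}. M i l * x l) = M i m * x m + (\<Sum>l\<in>A'-{i}. M i l * x l)"
          using \<open>finite A'\<close> unfolding A'_def by simp
        also have "(\<Sum>l\<in>A'-{i}. M i l * x l) = (\<Sum>l\<in>A'-{i}. M i l * x' l)"
          unfolding x_def A'_def by (rule sum.cong) auto
        finally show ?thesis using x' iA' Mim False unfolding x_def by simp
      qed
    qed
    then show ?thesis by blast
  qed
qed


lemma eig_sub:
  assumes "finite A" "tri A g M" "c \<in> eigenvalues_on A M"
  shows "\<exists>i\<in>A. c = complex_of_real (M i i)"
proof -
  obtain v where v: "\<exists>i\<in>A. v i \<noteq> 0"
    "\<forall>i\<in>A. (\<Sum>j\<in>A. complex_of_real (M i j) * v j) = c * v i"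
    using assms(3) unfolding eigenvalues_on_def by blast
  define B where "B = {i\<in>A. v i \<noteq> 0}"
  have "finite B" "B \<noteq> {}" using assms(1) v(1) unfolding B_def by auto
  then obtain i where i: "i \<in> B" "\<And>j. j \<in> B \<Longrightarrow> g j \<le> g i"
    using obtain_max by metis
  have iA: "i \<in> A" and vi: "v i \<noteq> 0" using i(1) unfolding B_def by auto
  have "(\<Sum>j\<in>A. complex_of_real (M i j) * v j)
      = complex_of_real (M i i) * v i + (\<Sum>j\<in>A-{i}. complex_of_real (M i j) * v j)"
    using iA assms(1) by (simp add: sum.remove)
  also have "(\<Sum>j\<in>A-{i}. complex_of_real (M i j) * v j) = 0"
  proof (rule sum.neutral, rule ballI)
    fix j assume j: "j \<in> A - {i}"
    show "complex_of_real (M i j) * v j = 0"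
    proof (cases "M i j = 0")
      case False
      then have "g i < g j" using assms(2) iA j unfolding tri_def by auto
      then have "j \<notin> B" using i(2) by force
      then show ?thesis using j unfolding B_def by auto
    qed simp
  qed
  finally have "complex_of_real (M i i) * v i = c * v i" using v(2) iA by (metis add.right_neutral)
  then show ?thesis using iA vi by (metis mult_right_cancel)
qed

lemma diag_eig:
  fixes M :: "'a \<Rightarrow> 'a \<Rightarrow> real"
  assumes "finite A" "tri A g M" "x \<in> A"
  shows "complex_of_real (M x x) \<in> eigenvalues_on A M"
proof -
  define lam where "lam = M x x"
  define C where "C = {j\<in>A. M j j = lam}"
  have "finite C" "C \<noteq> {}" using assms unfolding C_def lam_def by auto
  then obtain y where y: "y \<in> C" "\<And>j. j \<in> C \<Longrightarrow> g y \<le> g j"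
    using obtain_min by metis
  have yA: "y \<in> A" and My: "M y y = lam" using y(1) unfolding C_def by auto
  define B where "B = {j\<in>A. g j < g y}"
  have fB: "finite B" using assms(1) unfolding B_def by auto
  have yB: "y \<notin> B" unfolding B_def by auto
  have dB: "\<forall>j\<in>B. lam - M j j \<noteq> 0"
  proof
    fix j assume j: "j \<in> B"
    show "lam - M j j \<noteq> 0"
    proof
      assume "lam - M j j = 0"
      then have "j \<in> C" using j unfolding C_def B_def by auto
      then have "g y \<le> g j" using y(2) by auto
      then show False using j unfolding B_def by auto
    qed
  qed
  have "tri B g M" using assms(2) tri_subset[of A g M B] unfolding B_def by auto
  then obtain w where w: "\<forall>i\<in>B. (lam - M i i) * w i - (\<Sum>l\<in>B-{i}. M i l * w l) = M i y"
    using solve[OF fB _ dB, of g M "\<lambda>i. M i y"] by blast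
  define v where "v j = (if j = y then 1 else if j \<in> B then w j else 0)" for j
  have key: "(\<Sum>j\<in>A. M i j * v j) = M i y + (\<Sum>j\<in>B. M i j * w j)" for i
  proof -
    have sub: "insert y B \<subseteq> A" using yA unfolding B_def by auto
    have "(\<Sum>j\<in>A. M i j * v j) = (\<Sum>j\<in>insert y B. M i j * v j)"
      by (rule sum.mono_neutral_right[OF assms(1) sub]) (auto simp: v_def)
    also have "\<dots> = M i y + (\<Sum>j\<in>B. M i j * v j)" using fB yB by (simp add: v_def)
    also have "(\<Sum>j\<in>B. M i j * v j) = (\<Sum>j\<in>B. M i j * w j)"
      by (rule sum.cong) (use yB in \<open>auto simp: v_def\<close>)
    finally show ?thesis .
  qed
  have eq: "(\<Sum>j\<in>A. M i j * v j) = lam * v i" if iA: "i \<in> A" for i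
  proof (cases "i \<in> B")
    case True
    have "(\<Sum>j\<in>B. M i j * w j) = M i i * w i + (\<Sum>j\<in>B-{i}. M i j * w j)"
      using True fB by (simp add: sum.remove)
    then show ?thesis using key[of i] w True yB unfolding v_def
      by (auto simp: algebra_simps)
  next
    case False
    have giy: "g y \<le> g i" using False iA unfolding B_def by auto
    have z: "(\<Sum>j\<in>B. M i j * w j) = 0"
    proof (rule sum.neutral, rule ballI)
      fix j assume j: "j \<in> B"
      have "M i j = 0"
      proof (rule ccontr)
        assume "M i j \<noteq> 0"
        moreover have "i \<noteq> j" using j False by auto
        ultimately have "g i < g j" using assms(2) iA j unfolding tri_def B_def by auto
        then show False using j giy unfolding B_def by auto
      qed
      then show "M i j * w j = 0" by simp
    qed
    show ?thesis
    proof (cases "i = y")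
      case True then show ?thesis using key[of i] z My unfolding v_def by simp
    next
      case ne: False
      have "M i y = 0"
      proof (rule ccontr)
        assume "M i y \<noteq> 0"
        then have "g i < g y" using assms(2) iA yA ne unfolding tri_def by auto
        then show False using giy by auto
      qed
      then show ?thesis using key[of i] z ne False unfolding v_def by simp
    qed
  qed
  define vc where "vc j = complex_of_real (v j)" for j
  have "vc y \<noteq> 0" unfolding vc_def v_def by simp
  moreover have "\<forall>i\<in>A. (\<Sum>j\<in>A. complex_of_real (M i j) * vc j) = complex_of_real lam * vc i"
  proof
    fix i assume "i \<in> A"
    have "(\<Sum>j\<in>A. complex_of_real (M i j) * vc j) = complex_of_real (\<Sum>j\<in>A. M i j * v j)"
      unfolding vc_def by simp
    then show "(\<Sum>j\<in>A. complex_of_real (M i j) * vc j) = complex_of_real lam * vc i"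
      using eq[OF \<open>i \<in> A\<close>] unfolding vc_def by simp
  qed
  ultimately show ?thesis using yA unfolding eigenvalues_on_def lam_def by blast
qed

lemma eig_eq:
  assumes "finite A" "tri A g M"
  shows "eigenvalues_on A M = (\<lambda>i. complex_of_real (M i i)) ` A"
  using eig_sub[OF assms] diag_eig[OF assms] by blast

lemma rho_eq:
  assumes "finite A" "tri A g M"
  shows "spectral_radius_on A M = Max ((\<lambda>i. \<bar>M i i\<bar>) ` A)"
  unfolding spectral_radius_on_def eig_eq[OF assms] image_image by simp


lemma sum_E:
  fixes M :: "'a \<Rightarrow> 'a \<Rightarrow> 'b::comm_ring_1"
  assumes "finite A" "i \<in> A"
  shows "(\<Sum>l\<in>A. ((if i = l then 1 else 0) - M i l) * x l) = x i - (\<Sum>l\<in>A. M i l * x l)"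
proof -
  have "(\<Sum>l\<in>A. ((if i = l then 1 else 0) - M i l) * x l)
      = (\<Sum>l\<in>A. (if i = l then x l else 0)) - (\<Sum>l\<in>A. M i l * x l)"
    unfolding sum_subtractf[symmetric] by (rule sum.cong) (auto simp: left_diff_distrib)
  then show ?thesis using assms by simp
qed

lemma inv_right:
  fixes M :: "'a \<Rightarrow> 'a \<Rightarrow> real"
  assumes "finite A" "tri A g M" "\<forall>i\<in>A. M i i \<noteq> 1"
  shows "\<forall>i\<in>A. \<forall>j\<in>A. (\<Sum>l\<in>A. ((if i = l then 1 else 0) - M i l) * inv_I_minus_on A M l j)
            = (if i = j then 1 else 0)"
proof -
  have d: "\<forall>i\<in>A. 1 - M i i \<noteq> 0" using assms(3) by auto
  have "\<forall>j. \<exists>x. \<forall>i\<in>A. (1 - M i i) * x i - (\<Sum>l\<in>A-{i}. M i l * x l) = (if i = j then 1 else 0)"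
    using solve[OF assms(1,2) d] by presburger
  then obtain X where X: "\<And>j. \<forall>i\<in>A. (1 - M i i) * X j i - (\<Sum>l\<in>A-{i}. M i l * X j l) = (if i = j then 1 else 0)"
    by metis
  define N where "N l j = X j l" for l j
  have "\<forall>i\<in>A. \<forall>j\<in>A. (\<Sum>l\<in>A. ((if i = l then 1 else 0) - M i l) * N l j) = (if i = j then 1 else 0)"
  proof (intro ballI)
    fix i j assume i: "i \<in> A" and j: "j \<in> A"
    have "(\<Sum>l\<in>A. ((if i = l then 1 else 0) - M i l) * N l j) = N i j - (\<Sum>l\<in>A. M i l * N l j)"
      by (rule sum_E[OF assms(1) i])
    also have "(\<Sum>l\<in>A. M i l * N l j) = M i i * N i j + (\<Sum>l\<in>A-{i}. M i l * N l j)"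
      using i assms(1) by (simp add: sum.remove)
    finally have c: "(\<Sum>l\<in>A. ((if i = l then 1 else 0) - M i l) * N l j) = N i j - (M i i * N i j + (\<Sum>l\<in>A-{i}. M i l * N l j))" .
    have x: "(1 - M i i) * N i j - (\<Sum>l\<in>A-{i}. M i l * N l j) = (if i = j then 1 else 0)"
      using X[of j] i unfolding N_def by blast
    have "(1 - M i i) * N i j = N i j - M i i * N i j" by (simp add: left_diff_distrib)
    then show "(\<Sum>l\<in>A. ((if i = l then 1 else 0) - M i l) * N l j) = (if i = j then 1 else 0)"
      using c x by linarith
  qed
  then show ?thesis unfolding inv_I_minus_on_def by (rule someI[where x=N])
qed


lemma inv_apply:
  fixes M :: "'a \<Rightarrow> 'a \<Rightarrow> real" and v :: "'a \<Rightarrow> complex"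
  assumes "finite A" "tri A g M" "\<forall>i\<in>A. M i i \<noteq> 1" "i \<in> A"
  defines "w \<equiv> \<lambda>l. (\<Sum>j\<in>A. complex_of_real (inv_I_minus_on A M l j) * v j)"
  shows "w i - (\<Sum>l\<in>A. complex_of_real (M i l) * w l) = v i"
proof -
  let ?N = "inv_I_minus_on A M"
  have R: "\<forall>j\<in>A. (\<Sum>l\<in>A. ((if i = l then 1 else 0) - M i l) * ?N l j) = (if i = j then 1 else 0)"
    using inv_right[OF assms(1-3)] assms(4) by blast
  have "w i - (\<Sum>l\<in>A. complex_of_real (M i l) * w l)
      = (\<Sum>l\<in>A. ((if i = l then 1 else 0) - complex_of_real (M i l)) * w l)"
    using sum_E[OF assms(1,4), of "\<lambda>i l. complex_of_real (M i l)" w] by simp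
  also have "\<dots> = (\<Sum>l\<in>A. \<Sum>j\<in>A. ((if i = l then 1 else 0) - complex_of_real (M i l)) *
                    complex_of_real (?N l j) * v j)"
    unfolding w_def by (simp add: sum_distrib_left mult.assoc)
  also have "\<dots> = (\<Sum>j\<in>A. \<Sum>l\<in>A. ((if i = l then 1 else 0) - complex_of_real (M i l)) *
                    complex_of_real (?N l j) * v j)"
    by (rule sum.swap)
  also have "\<dots> = (\<Sum>j\<in>A. complex_of_real (\<Sum>l\<in>A. ((if i = l then 1 else 0) - M i l) * ?N l j) * v j)"
  proof -
    have pt: "\<And>l. ((if i = l then 1 else 0) - complex_of_real (M i l)) = complex_of_real ((if i = l then 1 else 0) - M i l)"
      by simp
    show ?thesis unfolding pt by (simp add: sum_distrib_right of_real_sum)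
  qed
  also have "\<dots> = (\<Sum>j\<in>A. (if i = j then v j else 0))"
    by (rule sum.cong) (use R in auto)
  also have "\<dots> = v i" using assms(1,4) by simp
  finally show ?thesis .
qed


lemma inv_eig:
  fixes M :: "'a \<Rightarrow> 'a \<Rightarrow> real"
  assumes fA: "finite A" and tA: "tri A g M" and d1: "\<forall>i\<in>A. M i i \<noteq> 1"
  shows "eigenvalues_on A (inv_I_minus_on A M) = (\<lambda>i. complex_of_real (1 / (1 - M i i))) ` A"
proof (rule set_eqI, rule iffI)
  let ?N = "inv_I_minus_on A M"
  fix c assume "c \<in> eigenvalues_on A ?N"
  then obtain v where v: "\<exists>i\<in>A. v i \<noteq> 0"
    "\<forall>i\<in>A. (\<Sum>j\<in>A. complex_of_real (?N i j) * v j) = c * v i"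
    unfolding eigenvalues_on_def by blast
  have e: "c * v i - c * (\<Sum>l\<in>A. complex_of_real (M i l) * v l) = v i" if i: "i \<in> A" for i
  proof -
    have "(\<Sum>j\<in>A. complex_of_real (?N i j) * v j) - (\<Sum>l\<in>A. complex_of_real (M i l) *
           (\<Sum>j\<in>A. complex_of_real (?N l j) * v j)) = v i"
      using inv_apply[OF fA tA d1 i, of v] by simp
    moreover have "(\<Sum>l\<in>A. complex_of_real (M i l) * (\<Sum>j\<in>A. complex_of_real (?N l j) * v j))
        = (\<Sum>l\<in>A. complex_of_real (M i l) * (c * v l))"
      by (rule sum.cong) (use v(2) in auto)
    ultimately show ?thesis using v(2) i by (simp add: sum_distrib_left algebra_simps)
  qed
  have c0: "c \<noteq> 0" using v(1) e by force
  have "\<forall>i\<in>A. (\<Sum>l\<in>A. complex_of_real (M i l) * v l) = (1 - 1 / c) * v i"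
  proof
    fix i assume "i \<in> A"
    from e[OF this] c0 show "(\<Sum>l\<in>A. complex_of_real (M i l) * v l) = (1 - 1 / c) * v i"
      by (simp add: field_simps)
  qed
  then have "1 - 1 / c \<in> eigenvalues_on A M" using v(1) unfolding eigenvalues_on_def by blast
  then obtain k where k: "k \<in> A" "1 - 1 / c = complex_of_real (M k k)"
    using eig_sub[OF fA tA] by blast
  then have "1 / c = 1 - complex_of_real (M k k)" by (simp add: algebra_simps)
  then have "c = 1 / (1 - complex_of_real (M k k))" by (metis divide_divide_eq_right div_by_1 mult_1)
  then show "c \<in> (\<lambda>i. complex_of_real (1 / (1 - M i i))) ` A" using k(1) by simp
next
  let ?N = "inv_I_minus_on A M"
  fix c assume "c \<in> (\<lambda>i. complex_of_real (1 / (1 - M i i))) ` A"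
  then obtain k where k: "k \<in> A" "c = complex_of_real (1 / (1 - M k k))" by blast
  define m where "m = complex_of_real (M k k)"
  have dm: "1 - m \<noteq> 0" using d1 k(1) unfolding m_def
    by (metis eq_iff_diff_eq_0 of_real_1 of_real_eq_iff)
  have "m \<in> eigenvalues_on A M" using diag_eig[OF fA tA k(1)] unfolding m_def .
  then obtain v where v: "\<exists>i\<in>A. v i \<noteq> 0"
    "\<forall>i\<in>A. (\<Sum>j\<in>A. complex_of_real (M i j) * v j) = m * v i"
    unfolding eigenvalues_on_def by blast
  define w where "w = (\<lambda>l. (\<Sum>j\<in>A. complex_of_real (?N l j) * v j))"
  define u where "u l = w l - v l / (1 - m)" for l
  have wi: "w i - (\<Sum>l\<in>A. complex_of_real (M i l) * w l) = v i" if "i \<in> A" for i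
    using inv_apply[OF fA tA d1 that, of v] unfolding w_def by simp
  have ueq: "(\<Sum>l\<in>A. complex_of_real (M i l) * u l) = 1 * u i" if i: "i \<in> A" for i
  proof -
    have "(\<Sum>l\<in>A. complex_of_real (M i l) * u l)
        = (\<Sum>l\<in>A. complex_of_real (M i l) * w l) - (\<Sum>l\<in>A. complex_of_real (M i l) * v l) / (1 - m)"
      unfolding u_def by (simp add: right_diff_distrib sum_subtractf sum_divide_distrib)
    also have "\<dots> = (w i - v i) - m * v i / (1 - m)"
    proof -
      have "(\<Sum>l\<in>A. complex_of_real (M i l) * w l) = w i - (w i - (\<Sum>l\<in>A. complex_of_real (M i l) * w l))"
        by simp
      also have "\<dots> = w i - v i" using wi[OF i] by simp
      finally have S: "(\<Sum>l\<in>A. complex_of_real (M i l) * w l) = w i - v i" .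
      have T: "(\<Sum>l\<in>A. complex_of_real (M i l) * v l) = m * v i" using v(2) i by blast
      show ?thesis unfolding S T by simp
    qed
    also have "\<dots> = u i" unfolding u_def using dm by (simp add: field_simps)
    finally show ?thesis by simp
  qed
  have u0: "\<forall>i\<in>A. u i = 0"
  proof (rule ccontr)
    assume "\<not> (\<forall>i\<in>A. u i = 0)"
    then have "1 \<in> eigenvalues_on A M" using ueq unfolding eigenvalues_on_def by blast
    then obtain k' where "k' \<in> A" "1 = complex_of_real (M k' k')" using eig_sub[OF fA tA] by blast
    then show False using d1 by (metis of_real_1 of_real_eq_iff)
  qed
  have "\<forall>i\<in>A. (\<Sum>j\<in>A. complex_of_real (?N i j) * v j) = c * v i"
  proof
    fix i assume "i \<in> A"
    then have "w i = v i / (1 - m)" using u0 unfolding u_def by auto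
    then show "(\<Sum>j\<in>A. complex_of_real (?N i j) * v j) = c * v i"
      unfolding w_def k(2) m_def by simp
  qed
  then show "c \<in> eigenvalues_on A ?N" using v(1) unfolding eigenvalues_on_def by blast
qed


lemma rho_inv:
  fixes M :: "'a \<Rightarrow> 'a \<Rightarrow> real"
  assumes "finite A" "tri A g M" "\<forall>i\<in>A. M i i \<noteq> 1"
  shows "spectral_radius_on A (inv_I_minus_on A M) = Max ((\<lambda>i. \<bar>1 / (1 - M i i)\<bar>) ` A)"
  unfolding spectral_radius_on_def inv_eig[OF assms] image_image
  by (simp del: of_real_divide of_real_diff add: norm_of_real)

lemma tri_ea: "tri A f (\<lambda>x y. ea_trans f (P x) x y)"
  unfolding tri_def ea_trans_def by auto

lemma diag_ea:
  fixes f :: "'a::finite \<Rightarrow> real"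
  assumes "stochastic P"
  shows "0 \<le> ea_trans f P x x \<and> ea_trans f P x x \<le> 1"
proof -
  have e: "ea_trans f P x x = 1 - (\<Sum>z\<in>{z. f z > f x}. P x z)" unfolding ea_trans_def by simp
  have nn: "\<forall>x y. 0 \<le> P x y" and s1: "(\<Sum>y\<in>UNIV. P x y) = 1" using assms unfolding stochastic_def by auto
  have "0 \<le> (\<Sum>z\<in>{z. f z > f x}. P x z)" using nn by (simp add: sum_nonneg)
  moreover have "(\<Sum>z\<in>{z. f z > f x}. P x z) \<le> (\<Sum>y\<in>UNIV. P x y)"
    by (rule sum_mono2) (use nn in auto)
  ultimately show ?thesis using e s1 by linarith
qed


theorem theorem4:
  fixes f :: "'a::finite \<Rightarrow> real"
    and \<kappa> :: nat
    and Pm :: "nat \<Rightarrow> 'a \<Rightarrow> 'a \<Rightarrow> real"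
  assumes nonempty: "S_non f \<noteq> {}"
    and kappa_pos: "\<kappa> \<ge> 1"
    and mutation: "\<And>k. k < \<kappa> \<Longrightarrow> stochastic (Pm k)"
    and complementary:
      "\<And>x l. x \<in> S_non f \<Longrightarrow> l < \<kappa> \<Longrightarrow>
         ea_trans f (Pm l) x x \<ge> (MIN k\<in>{..<\<kappa>}. spectral_radius_on (S_non f) (ea_trans f (Pm k))) \<Longrightarrow>
         (\<exists>k<\<kappa>. k \<noteq> l \<and>
            ea_trans f (Pm k) x x < (MIN k\<in>{..<\<kappa>}. spectral_radius_on (S_non f) (ea_trans f (Pm k))))"
  shows "\<exists>q. strategy_distribution \<kappa> q \<and>
           (\<forall>k<\<kappa>. asym_rate f (mixed_trans f \<kappa> Pm q) > asym_rate f (ea_trans f (Pm k)) \<and>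
                    asym_hitting_time f (mixed_trans f \<kappa> Pm q) < asym_hitting_time f (ea_trans f (Pm k)))"
proof -
  define A where "A = S_non f"
  have fA: "finite A" by simp
  have neA: "A \<noteq> {}" using nonempty unfolding A_def .
  define \<rho> where "\<rho> k = spectral_radius_on A (ea_trans f (Pm k))" for k
  define rmin where "rmin = (MIN k\<in>{..<\<kappa>}. \<rho> k)"
  have comp: "\<And>x l. x \<in> A \<Longrightarrow> l < \<kappa> \<Longrightarrow> ea_trans f (Pm l) x x \<ge> rmin \<Longrightarrow>
      \<exists>k<\<kappa>. ea_trans f (Pm k) x x < rmin"
    using complementary unfolding rmin_def \<rho>_def A_def by blast
  have "\<forall>x. \<exists>k<\<kappa>. (x \<in> A \<longrightarrow> ea_trans f (Pm k) x x < rmin)"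
  proof
    fix x
    have k0: "0 < \<kappa>" using kappa_pos by simp
    show "\<exists>k<\<kappa>. (x \<in> A \<longrightarrow> ea_trans f (Pm k) x x < rmin)"
    proof (cases "x \<in> A \<and> ea_trans f (Pm 0) x x \<ge> rmin")
      case True then show ?thesis using comp[of x 0] k0 by blast
    next
      case False then show ?thesis using k0 by force
    qed
  qed
  then obtain kk where kk: "\<And>x. kk x < \<kappa>" "\<And>x. x \<in> A \<Longrightarrow> ea_trans f (Pm (kk x)) x x < rmin"
    by metis
  define q where "q x k = (if k = kk x then 1 else 0 :: real)" for x k
  have sd: "strategy_distribution \<kappa> q"
    unfolding strategy_distribution_def q_def using kk(1) by simp
  define Mq where "Mq = (\<lambda>x y. ea_trans f (Pm (kk x)) x y)"
  have mq: "mixed_trans f \<kappa> Pm q = Mq"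
  proof (intro ext)
    fix x y
    have "(\<Sum>k<\<kappa>. q x k * ea_trans f (Pm k) x y) = (\<Sum>k<\<kappa>. if k = kk x then ea_trans f (Pm k) x y else 0)"
      unfolding q_def by (rule sum.cong) auto
    also have "\<dots> = ea_trans f (Pm (kk x)) x y" using kk(1)[of x] by simp
    finally show "mixed_trans f \<kappa> Pm q x y = Mq x y" unfolding mixed_trans_def Mq_def .
  qed
  have tq: "tri A f Mq" unfolding Mq_def by (rule tri_ea)
  have tk: "tri A f (ea_trans f (Pm k))" for k using tri_ea[of A f "\<lambda>_. Pm k"] by simp
  have dk: "0 \<le> ea_trans f (Pm k) x x \<and> ea_trans f (Pm k) x x \<le> 1" if "k < \<kappa>" for k x
    using diag_ea[OF mutation[OF that]] .
  have dq: "0 \<le> Mq x x \<and> Mq x x \<le> 1" for x unfolding Mq_def using dk kk(1) by blast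
  define rq where "rq = spectral_radius_on A Mq"
  have rq: "rq = Max ((\<lambda>i. \<bar>Mq i i\<bar>) ` A)" unfolding rq_def by (rule rho_eq[OF fA tq])
  have rk: "\<rho> k = Max ((\<lambda>i. \<bar>ea_trans f (Pm k) i i\<bar>) ` A)" for k
    unfolding \<rho>_def by (rule rho_eq[OF fA tk])
  have rq_lt: "rq < rmin" unfolding rq using fA neA kk(2) dq
    by (simp add: Max_less_iff Mq_def)
  obtain x0 where x0: "x0 \<in> A" using neA by blast
  have rq_ge: "0 \<le> rq" unfolding rq
    by (rule order.trans[OF _ Max_ge[of _ "\<bar>Mq x0 x0\<bar>"]]) (use fA x0 in auto)
  have Mq_le: "Mq i i \<le> rq" if "i \<in> A" for i
    unfolding rq by (rule order.trans[OF _ Max_ge[of _ "\<bar>Mq i i\<bar>"]]) (use fA that in auto)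
  have rmin_le: "rmin \<le> \<rho> k" if "k < \<kappa>" for k
    unfolding rmin_def by (rule Min_le) (use that in auto)
  have rk_le1: "\<rho> k \<le> 1" if "k < \<kappa>" for k
    unfolding rk using fA neA dk[OF that] by (simp add: Max_le_iff)
  have "\<forall>k<\<kappa>. asym_rate f Mq > asym_rate f (ea_trans f (Pm k)) \<and>
               asym_hitting_time f Mq < asym_hitting_time f (ea_trans f (Pm k))"
  proof (intro allI impI conjI)
    fix k assume k: "k < \<kappa>"
    have lt: "rq < \<rho> k" using rq_lt rmin_le[OF k] by linarith
    have rkpos: "0 < \<rho> k" using lt rq_ge by linarith
    have ark: "asym_rate f (ea_trans f (Pm k)) = ereal (- ln (\<rho> k))"
      unfolding asym_rate_def \<rho>_def[symmetric] A_def[symmetric] using rkpos by simp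
    show "asym_rate f Mq > asym_rate f (ea_trans f (Pm k))"
    proof (cases "rq = 0")
      case True
      have "asym_rate f Mq = \<infinity>" unfolding asym_rate_def A_def[symmetric] rq_def[symmetric] using True by simp
      then show ?thesis using ark by simp
    next
      case False
      then have "0 < rq" using rq_ge by linarith
      then have "ln rq < ln (\<rho> k)" using lt by simp
      have "asym_rate f Mq = ereal (- ln rq)" unfolding asym_rate_def A_def[symmetric] rq_def[symmetric] using False by simp
      then show ?thesis using ark \<open>ln rq < ln (\<rho> k)\<close> by simp
    qed
    have rq1: "rq < 1" using lt rk_le1[OF k] by linarith
    have dq1: "\<forall>i\<in>A. Mq i i \<noteq> 1" using Mq_le rq1 by fastforce
    define hq where "hq = spectral_radius_on A (inv_I_minus_on A Mq)"
    have ahq: "asym_hitting_time f Mq = ereal hq"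
      unfolding asym_hitting_time_def A_def[symmetric] rq_def[symmetric] hq_def using rq1 by simp
    show "asym_hitting_time f Mq < asym_hitting_time f (ea_trans f (Pm k))"
    proof (cases "\<rho> k < 1")
      case False
      have "asym_hitting_time f (ea_trans f (Pm k)) = \<infinity>"
        unfolding asym_hitting_time_def A_def[symmetric] \<rho>_def[symmetric] using False by simp
      then show ?thesis unfolding ahq by simp
    next
      case True
      have Mk_le: "ea_trans f (Pm k) i i \<le> \<rho> k" if "i \<in> A" for i
        unfolding rk by (rule order.trans[OF _ Max_ge[of _ "\<bar>ea_trans f (Pm k) i i\<bar>"]]) (use fA that in auto)
      have dk1: "\<forall>i\<in>A. ea_trans f (Pm k) i i \<noteq> 1" using Mk_le True by fastforce
      define hk where "hk = spectral_radius_on A (inv_I_minus_on A (ea_trans f (Pm k)))"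
      have ahk: "asym_hitting_time f (ea_trans f (Pm k)) = ereal hk"
        unfolding asym_hitting_time_def A_def[symmetric] \<rho>_def[symmetric] hk_def using True by simp
      have hq_le: "hq \<le> 1 / (1 - rq)"
        unfolding hq_def rho_inv[OF fA tq dq1]
      proof (subst Max_le_iff, (use fA neA in auto)[2], intro ballI)
        fix t assume "t \<in> (\<lambda>i. \<bar>1 / (1 - Mq i i)\<bar>) ` A"
        then obtain i where i: "i \<in> A" "t = \<bar>1 / (1 - Mq i i)\<bar>" by blast
        have "Mq i i \<le> rq" using Mq_le[OF i(1)] .
        then have "1 - rq \<le> 1 - Mq i i" "0 < 1 - rq" using rq1 by auto
        then have "1 / (1 - Mq i i) \<le> 1 / (1 - rq)" by (simp add: frac_le)
        moreover have "0 < 1 - Mq i i" using \<open>Mq i i \<le> rq\<close> rq1 by linarith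
        ultimately show "t \<le> 1 / (1 - rq)" using i(2) by simp
      qed
      have "\<rho> k \<in> (\<lambda>i. \<bar>ea_trans f (Pm k) i i\<bar>) ` A" unfolding rk using fA neA by simp
      then obtain j where j: "j \<in> A" "\<rho> k = \<bar>ea_trans f (Pm k) j j\<bar>" by blast
      then have jj: "ea_trans f (Pm k) j j = \<rho> k" using dk[OF k] by simp
      have hk_ge: "1 / (1 - \<rho> k) \<le> hk"
        unfolding hk_def rho_inv[OF fA tk dk1]
        by (rule order.trans[OF _ Max_ge[of _ "\<bar>1 / (1 - ea_trans f (Pm k) j j)\<bar>"]])
          (use fA j jj True in \<open>auto intro!: image_eqI[where x=j]\<close>)
      have "1 / (1 - rq) < 1 / (1 - \<rho> k)"
        by (rule divide_strict_left_mono) (use lt True rq1 in \<open>auto simp: mult_pos_pos\<close>)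
      then show ?thesis unfolding ahq ahk using hq_le hk_ge by simp
    qed
  qed
  then show ?thesis using sd mq by auto
qed

end
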